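(* Let $D\geq 1$, $\mathcal{C}=\{-1,1\}^D$, and let $\mathfrak{A}\subseteq 2^{[D]}$ be a collection of subsets of $[D]$. Let $\mathcal{F}(\mathfrak{A})$ be the class of Boolean functions $f:\mathcal{C}\to\{-1,1\}$ whose Fourier coefficients vanish outside $\mathfrak{A}$, i.e. $\hat f(S)=0$ for all $S\subseteq[D]$ with $S\notin\mathfrak{A}$, where $\hat f(S)=\mathbb{E}_{X\sim\mathrm{Unif}(\mathcal{C})}[f(X)\chi_S(X)]$ and $\chi_S(x)=\prod_{i\in S}x_i$. Then \[ \dim_E(\mathcal{F}(\mathfrak{A}))\leq|\mathfrak{A}|. \] In particular, when $\mathfrak{A}$ consists of sets of size at most $k$, $|\mathfrak{A}|\leq\binom{D}{0}+\binom{D}{1}+\cdots+\binom{D}{k}\leq(eD/k)^k$.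
   Context: For a class $\mathcal{F}$ of functions $\mathcal{C}\to\{-1,1\}$, a point $x\in\mathcal{C}$ is independent of a sequence $(x_j)_{j=1}^m$ with respect to $\mathcal{F}$ if there exist $f_1,f_2\in\mathcal{F}$ with $f_1(x_j)=f_2(x_j)$ for all $j\in[m]$ but $f_1(x)\neq f_2(x)$. The eluder dimension $\dim_E(\mathcal{F})$ is the largest $K$ such that there exist $x_1,\dots,x_K\in\mathcal{C}$ with each $x_i$ independent of $(x_j)_{j=1}^{i-1}$ with respect to $\mathcal{F}$. *)

theory Defs
  imports "HOL-Analysis.Analysis" "HOL-Library.FuncSet" "HOL-Library.Extended_Nat"
begin

definition cube :: "nat \<Rightarrow> (nat \<Rightarrow> real) set" where
  "cube D = PiE {0..<D} (\<lambda>_. {-1, 1})"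

definition chi :: "nat set \<Rightarrow> (nat \<Rightarrow> real) \<Rightarrow> real" where
  "chi S x = (\<Prod>i\<in>S. x i)"

definition fourier_coeff :: "nat \<Rightarrow> ((nat \<Rightarrow> real) \<Rightarrow> real) \<Rightarrow> nat set \<Rightarrow> real" where
  "fourier_coeff D f S = (\<Sum>x\<in>cube D. f x * chi S x) / real (card (cube D))"

definition fourier_class :: "nat \<Rightarrow> nat set set \<Rightarrow> ((nat \<Rightarrow> real) \<Rightarrow> real) set" where
  "fourier_class D A = {f. f \<in> cube D \<rightarrow>\<^sub>E {-1, 1} \<and>
      (\<forall>S. S \<subseteq> {0..<D} \<and> S \<notin> A \<longrightarrow> fourier_coeff D f S = 0)}"

definition independent_of :: "('a \<Rightarrow> 'b) set \<Rightarrow> 'a \<Rightarrow> 'a list \<Rightarrow> bool" where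
  "independent_of F x ys \<longleftrightarrow>
     (\<exists>f1\<in>F. \<exists>f2\<in>F. (\<forall>y\<in>set ys. f1 y = f2 y) \<and> f1 x \<noteq> f2 x)"

definition eluder_dim :: "'a set \<Rightarrow> ('a \<Rightarrow> 'b) set \<Rightarrow> enat" where
  "eluder_dim C F = Sup {enat (length xs) | xs. set xs \<subseteq> C \<and>
       (\<forall>i<length xs. independent_of F (xs ! i) (take i xs))}"

end

theory Submission
  imports Defs "HOL-Library.Function_Algebras"
begin


lemma card_cube: "card (cube D) = 2 ^ D"
  unfolding cube_def by (simp add: card_PiE numeral_2_eq_2)

lemma finite_cube: "finite (cube D)"
  unfolding cube_def by (simp add: finite_PiE)

lemma prod_cube:
  assumes x: "x \<in> cube D" and y: "y \<in> cube D"
  shows "(\<Prod>i\<in>{0..<D}. x i * y i + 1) = (if x = y then 2 ^ D else 0)"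
proof (cases "x = y")
  case True
  have "\<And>i. i \<in> {0..<D} \<Longrightarrow> x i * y i + 1 = 2"
  proof -
    fix i assume "i \<in> {0..<D}"
    then have "x i \<in> {-1,1}" using x unfolding cube_def by (auto simp: PiE_iff)
    then show "x i * y i + 1 = 2" using True by auto
  qed
  then show ?thesis using True by simp
next
  case False
  then obtain i where "x i \<noteq> y i" by auto
  moreover have "i \<in> {0..<D}"
  proof (rule ccontr)
    assume "i \<notin> {0..<D}"
    then have "x i = undefined" "y i = undefined" using x y unfolding cube_def by (auto simp: PiE_iff extensional_def)
    then show False using \<open>x i \<noteq> y i\<close> by simp
  qed
  moreover have "x i \<in> {-1,1}" "y i \<in> {-1,1}" using x y \<open>i \<in> {0..<D}\<close> unfolding cube_def by (auto simp: PiE_iff)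
  ultimately have "x i * y i + 1 = 0" by auto
  then show ?thesis using False \<open>i \<in> {0..<D}\<close> by (auto intro!: prod_zero)
qed

lemma fourier_inversion:
  assumes y: "y \<in> cube D"
  shows "f y = (\<Sum>S\<in>Pow {0..<D}. fourier_coeff D f S * chi S y)"
proof -
  have "(\<Sum>S\<in>Pow {0..<D}. fourier_coeff D f S * chi S y)
      = (\<Sum>S\<in>Pow {0..<D}. \<Sum>x\<in>cube D. f x * (chi S x * chi S y) / 2 ^ D)"
    unfolding fourier_coeff_def card_cube by (simp add: sum_divide_distrib sum_distrib_right mult.assoc)
  also have "\<dots> = (\<Sum>x\<in>cube D. f x / 2 ^ D * (\<Sum>S\<in>Pow {0..<D}. chi S x * chi S y))"
    by (subst sum.swap) (simp add: sum_distrib_left)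
  also have "\<dots> = (\<Sum>x\<in>cube D. f x / 2 ^ D * (\<Prod>i\<in>{0..<D}. x i * y i + 1))"
  proof (rule sum.cong[OF refl])
    fix x
    have "(\<Prod>i\<in>{0..<D}. x i * y i + 1) = (\<Sum>X\<in>Pow {0..<D}. (\<Prod>i\<in>X. x i * y i) * (\<Prod>i\<in>{0..<D}-X. 1))"
      by (rule prod_add) simp
    also have "\<dots> = (\<Sum>S\<in>Pow {0..<D}. chi S x * chi S y)"
      unfolding chi_def by (simp add: prod.distrib)
    finally show "f x / 2 ^ D * (\<Sum>S\<in>Pow {0..<D}. chi S x * chi S y) = f x / 2 ^ D * (\<Prod>i\<in>{0..<D}. x i * y i + 1)" by simp
  qed
  also have "\<dots> = (\<Sum>x\<in>cube D. if x = y then f y else 0)"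
    by (rule sum.cong[OF refl]) (simp add: prod_cube[OF _ y])
  also have "\<dots> = f y" using y finite_cube by simp
  finally show ?thesis by simp
qed


interpretation fv: vector_space "\<lambda>(c::real) (f::nat set \<Rightarrow> real) T. c * f T"
  by unfold_locales (auto simp: algebra_simps fun_eq_iff)

lemma sum_fun_apply: "(sum g A) t = (\<Sum>a\<in>A. g a t)"
  by (induction A rule: infinite_finite_induct) auto

definition vv :: "nat set set \<Rightarrow> (nat \<Rightarrow> real) \<Rightarrow> nat set \<Rightarrow> real" where
  "vv A x = (\<lambda>S. if S \<in> A then chi S x else 0)"

lemma class_expansion:
  assumes A: "A \<subseteq> Pow {0..<D}" and f: "f \<in> fourier_class D A" and z: "z \<in> cube D"
  shows "f z = (\<Sum>S\<in>A. fourier_coeff D f S * chi S z)"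
proof -
  have "f z = (\<Sum>S\<in>Pow {0..<D}. fourier_coeff D f S * chi S z)" by (rule fourier_inversion[OF z])
  also have "\<dots> = (\<Sum>S\<in>A. fourier_coeff D f S * chi S z)"
    using A f unfolding fourier_class_def by (intro sum.mono_neutral_right) auto
  finally show ?thesis .
qed

lemma key:
  assumes A: "A \<subseteq> Pow {0..<D}" and ys: "set ys \<subseteq> cube D" and x: "x \<in> cube D"
    and ind: "independent_of (fourier_class D A) x ys"
  shows "vv A x \<notin> fv.span (vv A ` set ys)"
proof
  assume sp: "vv A x \<in> fv.span (vv A ` set ys)"
  let ?W = "vv A ` set ys"
  obtain u where u: "vv A x = (\<Sum>w\<in>?W. (\<lambda>T. u w * w T))"
    using sp fv.span_finite[of ?W] by auto
  obtain f1 f2 where f1: "f1 \<in> fourier_class D A" and f2: "f2 \<in> fourier_class D A"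
    and agree: "\<forall>y\<in>set ys. f1 y = f2 y" and diff: "f1 x \<noteq> f2 x"
    using ind unfolding independent_of_def by blast
  define a where "a S = fourier_coeff D f1 S - fourier_coeff D f2 S" for S
  define G where "G h = (\<Sum>S\<in>A. a S * h S)" for h :: "nat set \<Rightarrow> real"
  have Gz: "f1 z - f2 z = G (vv A z)" if "z \<in> cube D" for z
  proof -
    have "f1 z - f2 z = (\<Sum>S\<in>A. fourier_coeff D f1 S * chi S z) - (\<Sum>S\<in>A. fourier_coeff D f2 S * chi S z)"
      using class_expansion[OF A f1 that] class_expansion[OF A f2 that] by simp
    also have "\<dots> = G (vv A z)"
      unfolding G_def a_def vv_def by (simp add: sum_subtractf[symmetric] algebra_simps)
    finally show ?thesis .
  qed
  have G0: "G w = 0" if "w \<in> ?W" for w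
  proof -
    obtain y where y: "y \<in> set ys" "w = vv A y" using \<open>w \<in> ?W\<close> by auto
    then have "G w = f1 y - f2 y" using Gz[of y] ys by auto
    then show ?thesis using agree y by simp
  qed
  have "G (vv A x) = (\<Sum>S\<in>A. a S * (\<Sum>w\<in>?W. u w * w S))"
    unfolding G_def by (subst u) (simp add: sum_fun_apply)
  also have "\<dots> = (\<Sum>w\<in>?W. u w * G w)"
    unfolding G_def by (simp add: sum_distrib_left sum_distrib_right algebra_simps sum.swap[of _ A])
  also have "\<dots> = 0" using G0 by simp
  finally have "f1 x - f2 x = 0" using Gz[OF x] by simp
  then show False using diff by simp
qed

lemma vv_span: "finite A \<Longrightarrow> vv A x \<in> fv.span ((\<lambda>S T. if T = S then 1 else 0) ` A)"
proof -
  assume fin: "finite A"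
  let ?d = "\<lambda>S T. if T = S then 1 else (0::real)"
  have "(\<Sum>S\<in>A. (\<lambda>T. chi S x * ?d S T)) \<in> fv.span (?d ` A)"
    by (intro fv.span_sum fv.span_scale fv.span_base) auto
  moreover have "(\<Sum>S\<in>A. (\<lambda>T. chi S x * ?d S T)) = vv A x"
  proof -
    have e: "\<And>a b. chi a x * (if b = a then 1 else 0) = (if b = a then chi a x else 0)" by simp
    show ?thesis unfolding vv_def using fin by (auto simp: fun_eq_iff sum_fun_apply e sum.delta')
  qed
  ultimately show ?thesis by simp
qed



lemma binom_exp_bound:
  fixes D k :: nat assumes k: "1 \<le> k" "k \<le> D"
  shows "real (\<Sum>j\<le>k. D choose j) \<le> (exp 1 * real D / real k) ^ k"
proof -
  define t where "t = real k / real D"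
  have t0: "0 < t" and t1: "t \<le> 1" using k unfolding t_def by auto
  have "t ^ k * real (\<Sum>j\<le>k. D choose j) = (\<Sum>j\<le>k. real (D choose j) * t ^ k)"
    by (simp add: sum_distrib_left mult.commute)
  also have "\<dots> \<le> (\<Sum>j\<le>k. real (D choose j) * t ^ j)"
    by (intro sum_mono mult_left_mono power_decreasing) (use t0 t1 in auto)
  also have "\<dots> \<le> (\<Sum>j\<le>D. real (D choose j) * t ^ j)"
    by (intro sum_mono2) (use k t0 in auto)
  also have "\<dots> = (t + 1) ^ D" by (simp add: binomial_ring mult.commute)
  also have "\<dots> \<le> exp t ^ D"
    by (intro power_mono) (use t0 in \<open>auto simp: add.commute[of t] exp_ge_add_one_self\<close>)
  also have "\<dots> = exp (real D * t)" by (simp add: exp_of_nat_mult)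
  also have "real D * t = real k" unfolding t_def using k by auto
  also have "exp (real k) = exp 1 ^ k" using exp_of_nat_mult[of k 1] by simp
  finally have "t ^ k * real (\<Sum>j\<le>k. D choose j) \<le> exp 1 ^ k" .
  then have "real (\<Sum>j\<le>k. D choose j) \<le> exp 1 ^ k / t ^ k"
    using t0 by (simp add: field_simps)
  also have "\<dots> = (exp 1 * real D / real k) ^ k"
    unfolding t_def by (simp add: power_divide power_mult_distrib field_simps)
  finally show ?thesis .
qed


lemma card_bound:
  assumes A: "A \<subseteq> Pow {0..<D}" and c: "\<forall>S\<in>A. card S \<le> k"
  shows "card A \<le> (\<Sum>j\<le>k. D choose j)"
proof -
  have "A \<subseteq> (\<Union>j\<le>k. {S. S \<subseteq> {0..<D} \<and> card S = j})" using A c by blast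
  then have "card A \<le> card (\<Union>j\<le>k. {S. S \<subseteq> {0..<D} \<and> card S = j})"
    by (intro card_mono) auto
  also have "\<dots> \<le> (\<Sum>j\<le>k. card {S. S \<subseteq> {0..<D} \<and> card S = j})"
    by (rule card_UN_le) simp
  also have "\<dots> = (\<Sum>j\<le>k. D choose j)" by (simp add: n_subsets)
  finally show ?thesis .
qed

lemma eluder_bound:
  assumes A: "A \<subseteq> Pow {0..<D}"
  shows "eluder_dim (cube D) (fourier_class D A) \<le> enat (card A)"
  unfolding eluder_dim_def
proof (rule Sup_least)
  fix e assume "e \<in> {enat (length xs) |xs. set xs \<subseteq> cube D \<and>
       (\<forall>i<length xs. independent_of (fourier_class D A) (xs ! i) (take i xs))}"
  then obtain xs where e: "e = enat (length xs)" and xs: "set xs \<subseteq> cube D"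
    and ind: "\<forall>i<length xs. independent_of (fourier_class D A) (xs ! i) (take i xs)" by blast
  have finA: "finite A" using A by (rule finite_subset) simp
  have claim: "m \<le> length xs \<Longrightarrow> fv.independent (vv A ` set (take m xs)) \<and> card (vv A ` set (take m xs)) = m" for m
  proof (induction m)
    case 0
    then show ?case by (simp add: fv.independent_empty)
  next
    case (Suc m)
    then have m: "m < length xs" by simp
    have sub: "set (take m xs) \<subseteq> cube D" using xs set_take_subset by (metis subset_trans)
    have xm: "xs ! m \<in> cube D" using xs m nth_mem by blast
    have "independent_of (fourier_class D A) (xs ! m) (take m xs)" using ind m by blast
    then have ns: "vv A (xs ! m) \<notin> fv.span (vv A ` set (take m xs))"
      by (rule key[OF A sub xm])
    have nin: "vv A (xs ! m) \<notin> vv A ` set (take m xs)" using ns fv.span_base by meson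
    have eq: "vv A ` set (take (Suc m) xs) = insert (vv A (xs ! m)) (vv A ` set (take m xs))"
      using m by (simp add: take_Suc_conv_app_nth)
    have IH: "fv.independent (vv A ` set (take m xs))" "card (vv A ` set (take m xs)) = m"
      using Suc.IH m by auto
    have "fv.independent (insert (vv A (xs ! m)) (vv A ` set (take m xs)))"
      using IH(1) ns nin fv.independent_insert by metis
    moreover have "card (insert (vv A (xs ! m)) (vv A ` set (take m xs))) = Suc m"
      using IH(2) nin by simp
    ultimately show ?case unfolding eq by blast
  qed
  from claim[of "length xs"] have i: "fv.independent (vv A ` set xs)" and c: "card (vv A ` set xs) = length xs"
    by auto
  let ?d = "\<lambda>S T. if T = S then 1 else (0::real)"
  have "vv A ` set xs \<subseteq> fv.span (?d ` A)" using vv_span[OF finA] by blast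
  then have "card (vv A ` set xs) \<le> card (?d ` A)"
    using fv.independent_span_bound[of "?d ` A" "vv A ` set xs"] finA i by blast
  also have "\<dots> \<le> card A" by (rule card_image_le[OF finA])
  finally show "e \<le> enat (card A)" using c e by simp
qed

theorem proposition3:
  fixes D :: nat and A :: "nat set set"
  assumes "D \<ge> 1"
    and "A \<subseteq> Pow {0..<D}"
  shows "eluder_dim (cube D) (fourier_class D A) \<le> enat (card A) \<and>
         (\<forall>k::nat. 1 \<le> k \<and> k \<le> D \<and> (\<forall>S\<in>A. card S \<le> k) \<longrightarrow>
           card A \<le> (\<Sum>j\<le>k. D choose j) \<and>
           real (\<Sum>j\<le>k. D choose j) \<le> (exp 1 * real D / real k) ^ k)"
  using eluder_bound[OF assms(2)] card_bound[OF assms(2)] binom_exp_bound by blast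

end
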